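(* There is a quantity $C=\mathrm{polylog}(d,n,1/\eta)$ such that, assuming $d\ge C$, for every $\delta\in(0,1)$ and every fixed symmetric matrix $M\in\mathbb R^{d\times d}$ of rank at most $k$ (independent of the samples), if $n\ge Ck^2d/\delta^2$ then with probability at least $1-\eta$, $$\Big\|\frac1n X\mathcal A(M)\Big\|_2=\Big\|\frac1n\sum_{i=1}^n(\boldsymbol x_i^\top M\boldsymbol x_i)\,\boldsymbol x_i\Big\|_2\le\delta\|M\|_2.$$
   Context: $\boldsymbol x_1,\dots,\boldsymbol x_n$ are i.i.d. standard Gaussian vectors in $\mathbb R^d$, $X=[\boldsymbol x_1,\dots,\boldsymbol x_n]\in\mathbb R^{d\times n}$, and $\mathcal A(M)=(\boldsymbol x_i^\top M\boldsymbol x_i)_{i=1}^n$. $\|\cdot\|_2$ is the spectral/Euclidean norm; $\eta\in(0,1)$ is a failure probability. *)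

theory Defs
  imports "HOL-Probability.Probability" "Jordan_Normal_Form.DL_Rank"
begin

definition vnorm :: "real vec \<Rightarrow> real" where
  "vnorm v = sqrt (\<Sum>i<dim_vec v. (v $ i)\<^sup>2)"

definition spec_norm :: "real mat \<Rightarrow> real" where
  "spec_norm M = Sup ((\<lambda>v. vnorm (M *\<^sub>v v)) ` {v \<in> carrier_vec (dim_col M). vnorm v = 1})"

text \<open>Joint law of n i.i.d. standard Gaussian vectors in R^d; a sample is
  \<omega> :: nat \<Rightarrow> nat \<Rightarrow> real, with x_i = (\<omega> i j)_{j<d}.\<close>
definition gauss_samples :: "nat \<Rightarrow> nat \<Rightarrow> (nat \<Rightarrow> nat \<Rightarrow> real) measure" where
  "gauss_samples d n = PiM {..<n} (\<lambda>_. PiM {..<d} (\<lambda>_. density lborel std_normal_density))"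

definition sample_vec :: "nat \<Rightarrow> (nat \<Rightarrow> nat \<Rightarrow> real) \<Rightarrow> nat \<Rightarrow> real vec" where
  "sample_vec d \<omega> i = vec d (\<lambda>j. \<omega> i j)"

definition data_mat :: "nat \<Rightarrow> nat \<Rightarrow> (nat \<Rightarrow> nat \<Rightarrow> real) \<Rightarrow> real mat" where
  "data_mat d n \<omega> = mat d n (\<lambda>(j, i). \<omega> i j)"

definition meas_op :: "nat \<Rightarrow> nat \<Rightarrow> (nat \<Rightarrow> nat \<Rightarrow> real) \<Rightarrow> real mat \<Rightarrow> real vec" where
  "meas_op d n \<omega> M = vec n (\<lambda>i. sample_vec d \<omega> i \<bullet> (M *\<^sub>v sample_vec d \<omega> i))"

end

theory Submission
  imports Defs "HOL-Probability.Probability" "Jordan_Normal_Form.Gram_Schmidt"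
begin

unbundle no vec_syntax
no_notation inner (infixl "\<bullet>" 70)


lemma std_normal_exp_bound:
  fixes T x :: real
  assumes T: "0 \<le> T"
  shows "indicator {x. T \<le> \<bar>x\<bar>} x * std_normal_density x
     \<le> sqrt 2 * exp (-T\<^sup>2/4) * normal_density 0 (sqrt 2) x"
proof (cases "T \<le> \<bar>x\<bar>")
  case True
  hence "T\<^sup>2 \<le> \<bar>x\<bar>\<^sup>2" using T by (intro power_mono) auto
  hence e1: "exp (-x\<^sup>2/4) \<le> exp (-T\<^sup>2/4)" by simp
  have nd: "normal_density 0 (sqrt 2) x = 1 / sqrt (4 * pi) * exp (- x\<^sup>2 / 4)"
    by (simp add: normal_density_def)
  have s: "sqrt (4 * pi) = sqrt 2 * sqrt (2*pi)"
    by (simp flip: real_sqrt_mult)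
  have "std_normal_density x = (1 / sqrt (2 * pi)) * exp (- x\<^sup>2 / 2)"
    by (simp add: std_normal_density_def)
  also have "\<dots> = sqrt 2 * normal_density 0 (sqrt 2) x * exp (-x\<^sup>2/4)"
    unfolding nd s by (simp add: field_simps mult_exp_exp flip: exp_add)
  also have "\<dots> \<le> sqrt 2 * normal_density 0 (sqrt 2) x * exp (-T\<^sup>2/4)"
    using e1 by (intro mult_left_mono) auto
  finally show ?thesis using True by (simp add: mult_ac)
next
  case False
  thus ?thesis by simp
qed

lemma std_normal_tail:
  fixes T :: real
  assumes T: "0 \<le> T"
  shows "measure (density lborel std_normal_density) {x. T \<le> \<bar>x\<bar>} \<le> 2 * exp (-T\<^sup>2/4)"
proof -
  have meas: "{x::real. T \<le> \<bar>x\<bar>} \<in> sets borel" by measurable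
  have "emeasure (density lborel std_normal_density) {x. T \<le> \<bar>x\<bar>}
      = (\<integral>\<^sup>+x. ennreal (indicator {x. T \<le> \<bar>x\<bar>} x * std_normal_density x) \<partial>lborel)"
    using meas by (subst emeasure_density) (auto intro!: nn_integral_cong simp: indicator_def)
  also have "\<dots> \<le> (\<integral>\<^sup>+x. ennreal (sqrt 2 * exp (-T\<^sup>2/4)) * ennreal (normal_density 0 (sqrt 2) x) \<partial>lborel)"
    by (intro nn_integral_mono) (auto simp flip: ennreal_mult intro!: ennreal_leI order.trans[OF std_normal_exp_bound[OF T]])
  also have "\<dots> = ennreal (sqrt 2 * exp (-T\<^sup>2/4)) * (\<integral>\<^sup>+x. ennreal (normal_density 0 (sqrt 2) x) \<partial>lborel)"
    by (rule nn_integral_cmult) simp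
  also have "(\<integral>\<^sup>+x. ennreal (normal_density 0 (sqrt 2) x) \<partial>lborel) = 1"
    by (subst nn_integral_eq_integral) auto
  finally have "emeasure (density lborel std_normal_density) {x. T \<le> \<bar>x\<bar>} \<le> ennreal (sqrt 2 * exp (-T\<^sup>2/4))"
    by simp
  hence "measure (density lborel std_normal_density) {x. T \<le> \<bar>x\<bar>} \<le> sqrt 2 * exp (-T\<^sup>2/4)"
    by (simp add: measure_def enn2real_leI)
  also have "\<dots> \<le> 2 * exp (-T\<^sup>2/4)"
    using sqrt2_less_2 by (intro mult_right_mono) auto
  finally show ?thesis .
qed


lemma indep_vars_PiM_components:
  assumes fin: "finite I" and M: "\<And>i. i \<in> I \<Longrightarrow> prob_space (M i)"
  shows "prob_space.indep_vars (PiM I M) M (\<lambda>i \<omega>. \<omega> i) I"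
proof -
  interpret P: prob_space "PiM I M" by (intro prob_space_PiM M)
  show ?thesis
  proof (cases "I = {}")
    case True
    then show ?thesis unfolding P.indep_vars_def P.indep_sets_def by auto
  next
    case False
    have "distr (PiM I M) (PiM I M) (\<lambda>x. \<lambda>i\<in>I. x i) = distr (PiM I M) (PiM I M) (\<lambda>x. x)"
      by (intro distr_cong) (auto simp: space_PiM PiE_def extensional_restrict)
    also have "\<dots> = PiM I M" by simp
    also have "\<dots> = PiM I (\<lambda>i. distr (PiM I M) (M i) (\<lambda>\<omega>. \<omega> i))"
      by (intro PiM_cong) (auto simp: distr_PiM_component M)
    finally show ?thesis
      using False by (subst P.indep_vars_iff_distr_eq_PiM') auto
  qed
qed

definition stdN :: "real measure" where "stdN = density lborel std_normal_density"

lemma prob_space_stdN: "prob_space stdN"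
  unfolding stdN_def by (rule prob_space_normal_density) simp

lemma sets_stdN [simp, measurable_cong]: "sets stdN = sets borel"
  by (simp add: stdN_def)

definition Pd :: "nat \<Rightarrow> (nat \<Rightarrow> real) measure" where
  "Pd d = PiM {..<d} (\<lambda>_. stdN)"

lemma prob_space_Pd: "prob_space (Pd d)"
  unfolding Pd_def by (intro prob_space_PiM prob_space_stdN)

lemma Pd_component_distributed:
  assumes "j < d"
  shows "distributed (Pd d) lborel (\<lambda>x. x j) std_normal_density"
proof -
  have "distr (Pd d) lborel (\<lambda>x. x j) = distr (Pd d) stdN (\<lambda>x. x j)"
    by (intro distr_cong) auto
  also have "\<dots> = stdN" unfolding Pd_def
    using assms by (intro distr_PiM_component prob_space_stdN) auto
  finally show ?thesis unfolding distributed_def stdN_def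
    using assms by (auto simp: Pd_def)
qed

lemma Pd_linear_tail:
  fixes u :: "nat \<Rightarrow> real"
  assumes u: "(\<Sum>j<d. (u j)\<^sup>2) = 1" and T: "0 \<le> T"
  shows "measure (Pd d) {x \<in> space (Pd d). T \<le> \<bar>\<Sum>j<d. u j * x j\<bar>} \<le> 2 * exp (-T\<^sup>2/4)"
proof -
  interpret P: prob_space "Pd d" by (rule prob_space_Pd)
  define J where "J = {j. j < d \<and> u j \<noteq> 0}"
  have finJ: "finite J" unfolding J_def by auto
  have sumJ: "(\<Sum>j<d. f j) = (\<Sum>j\<in>J. f j)" if "\<And>j. u j = 0 \<Longrightarrow> f j = 0" for f :: "nat \<Rightarrow> real"
    unfolding J_def using that by (intro sum.mono_neutral_right) auto
  have J1: "(\<Sum>j\<in>J. (u j)\<^sup>2) = 1" using u sumJ[of "\<lambda>j. (u j)\<^sup>2"] by simp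
  hence Jne: "J \<noteq> {}" by auto
  have ind00: "P.indep_vars (\<lambda>_. stdN) (\<lambda>j x. x j) {..<d}"
    using indep_vars_PiM_components[of "{..<d}" "\<lambda>_. stdN"] prob_space_stdN
    unfolding Pd_def by auto
  have ind0: "P.indep_vars (\<lambda>_. stdN) (\<lambda>j x. x j) J"
    by (rule P.indep_vars_subset[OF ind00]) (auto simp: J_def)
  have ind: "P.indep_vars (\<lambda>_. borel) (\<lambda>j x. u j * x j) J"
    by (rule P.indep_vars_compose2[OF ind0]) auto
  have distj: "distributed (Pd d) lborel (\<lambda>x. u j * x j) (normal_density 0 \<bar>u j\<bar>)" if "j \<in> J" for j
  proof -
    have "u j \<noteq> 0" "j < d" using that by (auto simp: J_def)
    from P.normal_density_affine[OF Pd_component_distributed[OF \<open>j < d\<close>], of "u j" 0] this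
    show ?thesis by simp
  qed
  have "distributed (Pd d) lborel (\<lambda>x. \<Sum>j\<in>J. u j * x j)
          (normal_density (\<Sum>j\<in>J. 0) (sqrt (\<Sum>j\<in>J. \<bar>u j\<bar>\<^sup>2)))"
    by (rule P.sum_indep_normal[OF finJ Jne ind]) (auto simp: J_def intro: distj)
  hence dist: "distributed (Pd d) lborel (\<lambda>x. \<Sum>j\<in>J. u j * x j) std_normal_density"
    using J1 by simp
  have eq: "{x \<in> space (Pd d). T \<le> \<bar>\<Sum>j<d. u j * x j\<bar>}
      = (\<lambda>x. \<Sum>j\<in>J. u j * x j) -` {y. T \<le> \<bar>y\<bar>} \<inter> space (Pd d)"
    by (subst sumJ) auto
  have "measure (Pd d) {x \<in> space (Pd d). T \<le> \<bar>\<Sum>j<d. u j * x j\<bar>}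
        = measure (distr (Pd d) lborel (\<lambda>x. \<Sum>j\<in>J. u j * x j)) {y. T \<le> \<bar>y\<bar>}"
    unfolding eq using dist by (subst measure_distr) (auto simp: distributed_def)
  also have "\<dots> = measure (density lborel std_normal_density) {y. T \<le> \<bar>y\<bar>}"
    using dist by (simp add: distributed_def)
  also have "\<dots> \<le> 2 * exp (-T\<^sup>2/4)" by (rule std_normal_tail[OF T])
  finally show ?thesis .
qed


lemma stdN_neg: "distr stdN stdN uminus = stdN"
proof -
  interpret N: prob_space stdN by (rule prob_space_stdN)
  have "distr stdN lborel (\<lambda>x. x) = stdN"
    by (rule distr_id2) simp
  hence d0: "distributed stdN lborel (\<lambda>x. x) std_normal_density"
    unfolding distributed_def by (auto simp: stdN_def)
  have "distributed stdN lborel (\<lambda>x. 0 + (-1) * x) (normal_density (0 + (-1) * 0) (\<bar>-1\<bar> * 1))"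
    by (rule N.normal_density_affine[OF d0]) auto
  hence "distributed stdN lborel uminus std_normal_density" by simp
  hence "distr stdN lborel uminus = stdN" by (simp add: distributed_def stdN_def)
  moreover have "distr stdN stdN uminus = distr stdN lborel uminus"
    by (rule distr_cong) auto
  ultimately show ?thesis by simp
qed

definition negv :: "nat \<Rightarrow> (nat \<Rightarrow> real) \<Rightarrow> (nat \<Rightarrow> real)" where
  "negv d x = (\<lambda>j\<in>{..<d}. - x j)"

lemma negv_measurable [measurable]: "negv d \<in> measurable (Pd d) (Pd d)"
  unfolding negv_def Pd_def by measurable

lemma Pd_neg: "distr (Pd d) (Pd d) (negv d) = Pd d"
proof -
  have "distr (Pd d) (Pd d) (negv d) = distr (PiM {..<d} (\<lambda>_. stdN)) (PiM {..<d} (\<lambda>_. stdN)) (compose {..<d} uminus)"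
    unfolding Pd_def negv_def compose_def by simp
  also have "\<dots> = PiM {..<d} (\<lambda>_. distr stdN stdN uminus)"
    by (intro distr_PiM_finite_prob_space product_prob_spaceI prob_space_stdN) auto
  also have "\<dots> = Pd d" by (simp add: stdN_neg Pd_def)
  finally show ?thesis .
qed

lemma Pd_odd_expectation:
  fixes f :: "(nat \<Rightarrow> real) \<Rightarrow> real"
  assumes f [measurable]: "f \<in> borel_measurable (Pd d)"
  assumes odd: "\<And>x. x \<in> space (Pd d) \<Longrightarrow> f (negv d x) = - f x"
  shows "integral\<^sup>L (Pd d) f = 0"
proof -
  have "integral\<^sup>L (Pd d) f = integral\<^sup>L (distr (Pd d) (Pd d) (negv d)) f"
    by (simp add: Pd_neg)
  also have "\<dots> = integral\<^sup>L (Pd d) (\<lambda>x. f (negv d x))"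
    by (rule integral_distr) auto
  also have "\<dots> = integral\<^sup>L (Pd d) (\<lambda>x. - f x)"
    by (rule Bochner_Integration.integral_cong) (auto simp: odd)
  also have "\<dots> = - integral\<^sup>L (Pd d) f" by simp
  finally show ?thesis by simp
qed


lemma gauss_samples_Pd: "gauss_samples d n = PiM {..<n} (\<lambda>_. Pd d)"
  unfolding gauss_samples_def Pd_def stdN_def ..

lemma prob_space_G: "prob_space (gauss_samples d n)"
  unfolding gauss_samples_Pd by (intro prob_space_PiM prob_space_Pd)

lemma G_component_expectation:
  fixes f :: "(nat \<Rightarrow> real) \<Rightarrow> real"
  assumes [measurable]: "f \<in> borel_measurable (Pd d)" and i: "i < n"
  shows "integral\<^sup>L (gauss_samples d n) (\<lambda>\<omega>. f (\<omega> i)) = integral\<^sup>L (Pd d) f"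
proof -
  have "integral\<^sup>L (gauss_samples d n) (\<lambda>\<omega>. f (\<omega> i))
     = integral\<^sup>L (distr (gauss_samples d n) (Pd d) (\<lambda>\<omega>. \<omega> i)) f"
    unfolding gauss_samples_Pd
    by (rule integral_distr[of "\<lambda>\<omega>. \<omega> i" _ "Pd d" f, symmetric]) (use i in \<open>auto intro: measurable_component_singleton\<close>)
  also have "distr (gauss_samples d n) (Pd d) (\<lambda>\<omega>. \<omega> i) = Pd d"
    unfolding gauss_samples_Pd using i by (intro distr_PiM_component prob_space_Pd) auto
  finally show ?thesis .
qed

lemma G_hoeffding:
  fixes W :: "(nat \<Rightarrow> real) \<Rightarrow> real"
  assumes W [measurable]: "W \<in> borel_measurable (Pd d)"
  assumes bnd: "\<And>x. x \<in> space (Pd d) \<Longrightarrow> \<bar>W x\<bar> \<le> B"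
  assumes odd: "\<And>x. x \<in> space (Pd d) \<Longrightarrow> W (negv d x) = - W x"
  assumes B: "B > 0" and n: "n > 0" and eps: "\<epsilon> \<ge> 0"
  shows "measure (gauss_samples d n) {\<omega> \<in> space (gauss_samples d n). \<epsilon> \<le> \<bar>\<Sum>i<n. W (\<omega> i)\<bar>}
           \<le> 2 * exp (- \<epsilon>\<^sup>2 / (2 * real n * B\<^sup>2))"
proof -
  let ?G = "gauss_samples d n"
  interpret G: prob_space ?G by (rule prob_space_G)
  have ind0: "G.indep_vars (\<lambda>_. Pd d) (\<lambda>i \<omega>. \<omega> i) {..<n}"
    using indep_vars_PiM_components[of "{..<n}" "\<lambda>_. Pd d"] prob_space_Pd
    unfolding gauss_samples_Pd by auto
  have ind: "G.indep_vars (\<lambda>_. borel) (\<lambda>i \<omega>. W (\<omega> i)) {..<n}"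
    by (rule G.indep_vars_compose2[OF ind0]) auto
  have sp: "\<omega> i \<in> space (Pd d)" if "\<omega> \<in> space ?G" "i < n" for \<omega> i
    using that unfolding gauss_samples_Pd by (auto simp: space_PiM)
  interpret H: Hoeffding_ineq ?G "{..<n}" "\<lambda>i \<omega>. W (\<omega> i)" "\<lambda>_. -B" "\<lambda>_. B"
    "\<Sum>i<n. G.expectation (\<lambda>\<omega>. W (\<omega> i))"
  proof unfold_locales
    show "finite {..<n}" by simp
    show "G.indep_vars (\<lambda>_. borel) (\<lambda>i \<omega>. W (\<omega> i)) {..<n}" by (rule ind)
    fix i assume "i \<in> {..<n}"
    show "AE x in ?G. W (x i) \<in> {-B..B}"
    proof (intro AE_I2)
      fix x assume "x \<in> space ?G"
      hence "\<bar>W (x i)\<bar> \<le> B" using bnd sp \<open>i \<in> {..<n}\<close> by auto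
      thus "W (x i) \<in> {-B..B}" by (auto simp: abs_le_iff)
    qed
  qed simp
  have mu: "(\<Sum>i<n. G.expectation (\<lambda>\<omega>. W (\<omega> i))) = 0"
    by (intro sum.neutral ballI)
       (simp add: G_component_expectation Pd_odd_expectation[OF W odd])
  have sumpos: "(\<Sum>i<n. (B - - B)\<^sup>2) > 0" using B n by simp
  have "measure ?G {\<omega> \<in> space ?G. \<epsilon> \<le> \<bar>(\<Sum>i<n. W (\<omega> i)) - (\<Sum>i<n. G.expectation (\<lambda>\<omega>. W (\<omega> i)))\<bar>}
         \<le> 2 * exp (-2 * \<epsilon>\<^sup>2 / (\<Sum>i<n. (B - - B)\<^sup>2))"
    by (rule H.Hoeffding_ineq_abs_ge[OF eps sumpos])
  also have "-2 * \<epsilon>\<^sup>2 / (\<Sum>i<n. (B - - B)\<^sup>2) = - \<epsilon>\<^sup>2 / (2 * real n * B\<^sup>2)"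
    using B n by (simp add: power2_eq_square field_simps)
  finally show ?thesis unfolding mu by simp
qed



lemma conj_real_vec [simp]: "conjugate (v :: real vec) = v"
  by (auto simp: conjugate_vec_def)

lemma cscalar_real [simp]: "(v :: real vec) \<bullet>c w = v \<bullet> w"
  by (simp add: scalar_prod_def)

lemma vnorm_L2: "vnorm v = L2_set (\<lambda>i. v $ i) {..<dim_vec v}"
  by (simp add: vnorm_def L2_set_def)

lemma vnorm_sq: "(vnorm v)\<^sup>2 = v \<bullet> v"
proof -
  have "0 \<le> (\<Sum>i<dim_vec v. (v $ i)\<^sup>2)" by (intro sum_nonneg) simp
  hence "(vnorm v)\<^sup>2 = (\<Sum>i<dim_vec v. (v $ i)\<^sup>2)" unfolding vnorm_def by simp
  also have "\<dots> = v \<bullet> v" by (simp add: scalar_prod_def power2_eq_square atLeast0LessThan)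
  finally show ?thesis .
qed

lemma vnorm_nonneg: "vnorm v \<ge> 0"
  unfolding vnorm_def by (intro real_sqrt_ge_zero sum_nonneg) simp

lemma cauchy_schwarz_vec:
  assumes "dim_vec w = dim_vec v"
  shows "\<bar>v \<bullet> w\<bar> \<le> vnorm v * vnorm w"
proof -
  have "\<bar>v \<bullet> w\<bar> = \<bar>\<Sum>i<dim_vec v. v $ i * w $ i\<bar>"
    using assms by (simp add: scalar_prod_def atLeast0LessThan)
  also have "\<dots> \<le> (\<Sum>i<dim_vec v. \<bar>v $ i\<bar> * \<bar>w $ i\<bar>)"
    by (rule order_trans[OF sum_abs]) (simp add: abs_mult)
  also have "\<dots> \<le> L2_set (\<lambda>i. v $ i) {..<dim_vec v} * L2_set (\<lambda>i. w $ i) {..<dim_vec v}"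
    by (rule L2_set_mult_ineq)
  finally show ?thesis using assms by (simp add: vnorm_L2)
qed



lemma vnorm_smult: "vnorm (c \<cdot>\<^sub>v v) = \<bar>c\<bar> * vnorm v"
proof -
  have "vnorm (c \<cdot>\<^sub>v v) = sqrt (c\<^sup>2 * (\<Sum>i<dim_vec v. (v $ i)\<^sup>2))"
    unfolding vnorm_def by (simp add: power_mult_distrib sum_distrib_left)
  also have "\<dots> = \<bar>c\<bar> * vnorm v"
    unfolding vnorm_def by (simp add: real_sqrt_mult)
  finally show ?thesis .
qed

lemma vnorm_eq_0: "v \<in> carrier_vec n \<Longrightarrow> vnorm v = 0 \<longleftrightarrow> v = 0\<^sub>v n"
  using vnorm_sq[of v] conjugate_square_eq_0_vec[of v n] by auto

lemma spec_norm_bdd: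
  "bdd_above ((\<lambda>v. vnorm (M *\<^sub>v v)) ` {v \<in> carrier_vec (dim_col M). vnorm v = 1})"
proof (rule bdd_aboveI2)
  fix v assume v: "v \<in> {v \<in> carrier_vec (dim_col M). vnorm v = 1}"
  have "vnorm (M *\<^sub>v v) = L2_set (\<lambda>i. (M *\<^sub>v v) $ i) {..<dim_row M}"
    by (simp add: vnorm_L2)
  also have "\<dots> \<le> (\<Sum>i<dim_row M. \<bar>(M *\<^sub>v v) $ i\<bar>)" by (rule L2_set_le_sum_abs)
  also have "\<dots> \<le> (\<Sum>i<dim_row M. vnorm (row M i))"
  proof (intro sum_mono)
    fix i assume i: "i \<in> {..<dim_row M}"
    have "\<bar>(M *\<^sub>v v) $ i\<bar> = \<bar>row M i \<bullet> v\<bar>" using i by simp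
    also have "\<dots> \<le> vnorm (row M i) * vnorm v"
      using v by (intro cauchy_schwarz_vec) auto
    finally show "\<bar>(M *\<^sub>v v) $ i\<bar> \<le> vnorm (row M i)" using v by simp
  qed
  finally show "vnorm (M *\<^sub>v v) \<le> (\<Sum>i<dim_row M. vnorm (row M i))" .
qed

lemma spec_norm_bound:
  assumes v: "v \<in> carrier_vec (dim_col M)"
  shows "vnorm (M *\<^sub>v v) \<le> spec_norm M * vnorm v"
proof (cases "vnorm v = 0")
  case True
  hence "v = 0\<^sub>v (dim_col M)" using vnorm_eq_0[OF v] by simp
  hence "M *\<^sub>v v = 0\<^sub>v (dim_row M)" by auto
  hence "vnorm (M *\<^sub>v v) = 0" using vnorm_eq_0[of _ "dim_row M"] by auto
  thus ?thesis using True by simp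
next
  case False
  hence s: "vnorm v > 0" using vnorm_nonneg[of v] by simp
  define v' where "v' = (1 / vnorm v) \<cdot>\<^sub>v v"
  have v'c: "v' \<in> carrier_vec (dim_col M)" using v by (simp add: v'_def)
  have v'1: "vnorm v' = 1" using s by (simp add: v'_def vnorm_smult)
  have Mv': "M *\<^sub>v v' = (1 / vnorm v) \<cdot>\<^sub>v (M *\<^sub>v v)"
    unfolding v'_def using v by (intro mult_mat_vec[of M "dim_row M" "dim_col M"]) auto
  have "vnorm (M *\<^sub>v v') \<le> spec_norm M"
    unfolding spec_norm_def using v'c v'1 by (intro cSup_upper spec_norm_bdd) auto
  hence "vnorm (M *\<^sub>v v) / vnorm v \<le> spec_norm M"
    using s by (simp add: Mv' vnorm_smult)
  thus ?thesis using s by (simp add: field_simps)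
qed

lemma spec_norm_nonneg:
  assumes "dim_col M > 0"
  shows "spec_norm M \<ge> 0"
proof -
  have e: "unit_vec (dim_col M) 0 \<in> {v \<in> carrier_vec (dim_col M). vnorm v = 1}"
  proof -
    have "(\<Sum>i<dim_col M. (if i = 0 then 1 else 0 :: real)\<^sup>2) = (\<Sum>i<dim_col M. (if i = 0 then 1 else 0 :: real))"
      by (intro sum.cong) auto
    also have "\<dots> = 1" using assms by (simp add: sum.delta)
    finally show ?thesis by (auto simp: vnorm_def unit_vec_def)
  qed
  have "0 \<le> vnorm (M *\<^sub>v unit_vec (dim_col M) 0)" by (rule vnorm_nonneg)
  also have "\<dots> \<le> spec_norm M"
    unfolding spec_norm_def using e by (intro cSup_upper spec_norm_bdd) auto
  finally show ?thesis .
qed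

lemma quad_form_bound:
  assumes M: "M \<in> carrier_mat d d" and v: "v \<in> carrier_vec d"
  shows "\<bar>v \<bullet> (M *\<^sub>v v)\<bar> \<le> spec_norm M * (v \<bullet> v)"
proof -
  have "\<bar>v \<bullet> (M *\<^sub>v v)\<bar> \<le> vnorm v * vnorm (M *\<^sub>v v)"
    using M v by (intro cauchy_schwarz_vec) auto
  also have "\<dots> \<le> vnorm v * (spec_norm M * vnorm v)"
    using M v by (intro mult_left_mono spec_norm_bound vnorm_nonneg) auto
  also have "\<dots> = spec_norm M * (vnorm v)\<^sup>2" by (simp add: power2_eq_square)
  finally show ?thesis by (simp add: vnorm_sq)
qed



lemma onb_exists:
  fixes M :: "real mat"
  assumes M: "M \<in> carrier_mat d d"
  shows "\<exists>us. set us \<subseteq> carrier_vec d \<and> length us = vec_space.rank d M \<and>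
      (\<forall>a<length us. \<forall>b<length us. us!a \<bullet> us!b = (if a = b then 1 else 0)) \<and>
      (\<forall>w\<in>carrier_vec d. (\<forall>u\<in>set us. w \<bullet> u = 0) \<longrightarrow> (\<forall>j<d. w \<bullet> col M j = 0))"
proof -
  interpret V: cof_vec_space d "TYPE(real)" .
  define P where "P = (\<lambda>T. T \<subseteq> set (cols M) \<and> \<not> V.lin_dep T)"
  have P0: "P {}" unfolding P_def by (auto simp: V.lin_dep_def)
  obtain S where S: "finite S" "maximal S P"
    using maximal_exists_superset[of "set (cols M)" P "{}"] P0 unfolding P_def by blast
  have rk: "vec_space.rank d M = card S"
    using V.rank_card_indpt[OF M] S unfolding P_def by simp
  have SP: "S \<subseteq> set (cols M)" "\<not> V.lin_dep S" using S(2) unfolding maximal_def P_def by auto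
  have colsC: "set (cols M) \<subseteq> carrier_vec d" using M by (auto simp: cols_def)
  have SC: "S \<subseteq> carrier_vec d" using SP colsC by auto
  have colspan: "col M j \<in> V.span S" if j: "j < d" for j
  proof (cases "col M j \<in> S")
    case True thus ?thesis using V.in_own_span SC by blast
  next
    case False
    have cj: "col M j \<in> set (cols M)" using j M by (auto simp: cols_def)
    have "V.lin_dep (S \<union> {col M j})"
    proof (rule ccontr)
      assume "\<not> V.lin_dep (S \<union> {col M j})"
      hence "P (S \<union> {col M j})" unfolding P_def using SP cj by auto
      hence "S \<union> {col M j} = S" using S(2) unfolding maximal_def by blast
      with False show False by auto
    qed
    thus ?thesis
      using V.lin_dep_iff_in_span[OF SC SP(2) _ False] cj colsC by auto
  qed
  obtain ws where ws: "set ws = S" "distinct ws" using finite_distinct_list[OF S(1)] by blast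
  define vs where "vs = gram_schmidt d ws"
  have gs: "V.span (set ws) = V.span (set vs)" "corthogonal vs" "set vs \<subseteq> carrier_vec d"
      "length vs = length ws"
    using V.gram_schmidt_result[OF _ ws(2) _ vs_def] ws SC SP by auto
  define us where "us = map (\<lambda>v. (1 / vnorm v) \<cdot>\<^sub>v v) vs"
  have vsC: "vs ! a \<in> carrier_vec d" if "a < length vs" for a
    using gs(3) that by auto
  have npos: "vnorm (vs ! a) > 0" if a: "a < length vs" for a
  proof -
    have "vs ! a \<bullet> vs ! a \<noteq> 0" using corthogonalD[OF gs(2) a a] by simp
    hence "vnorm (vs ! a) \<noteq> 0" using vnorm_sq[of "vs ! a"] by auto
    thus ?thesis using vnorm_nonneg[of "vs ! a"] by simp
  qed
  have usC: "set us \<subseteq> carrier_vec d" using gs(3) by (auto simp: us_def)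
  have len: "length us = vec_space.rank d M"
    using gs(4) ws rk distinct_card[OF ws(2)] by (simp add: us_def)
  have orth: "us!a \<bullet> us!b = (if a = b then 1 else 0)"
    if a: "a < length us" and b: "b < length us" for a b
  proof -
    have a': "a < length vs" and b': "b < length vs" using a b by (auto simp: us_def)
    have "us!a \<bullet> us!b = (1 / vnorm (vs!a)) * (1 / vnorm (vs!b)) * (vs!a \<bullet> vs!b)"
      using vsC[OF a'] vsC[OF b'] a' b' by (simp add: us_def)
    also have "\<dots> = (if a = b then 1 else 0)"
    proof (cases "a = b")
      case True
      thus ?thesis using npos[OF a'] by (simp add: vnorm_sq[symmetric] power2_eq_square)
    next
      case False
      thus ?thesis using corthogonalD[OF gs(2) a' b'] by simp
    qed
    finally show ?thesis .
  qed
  have perp: "\<forall>j<d. w \<bullet> col M j = 0"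
    if w: "w \<in> carrier_vec d" and wu: "\<forall>u\<in>set us. w \<bullet> u = 0" for w
  proof -
    have wv: "w \<bullet> v = 0" if v: "v \<in> set vs" for v
    proof -
      obtain a where a: "a < length vs" "v = vs ! a" using v by (auto simp: in_set_conv_nth)
      have "us ! a \<in> set us" using a by (simp add: us_def)
      hence "w \<bullet> us ! a = 0" using wu by auto
      hence "(1 / vnorm v) * (w \<bullet> v) = 0"
        using a w vsC[OF a(1)] by (simp add: us_def)
      thus ?thesis using npos[OF a(1)] a by simp
    qed
    have "w \<in> V.orthogonal_complement (set vs)"
      using w wv unfolding V.orthogonal_complement_def by auto
    also have "V.orthogonal_complement (set vs) = V.orthogonal_complement (V.span (set vs))"
      using gs(3) by (rule V.in_orthogonal_complement_span[symmetric])
    also have "\<dots> = V.orthogonal_complement (V.span S)" using gs(1) ws by simp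
    finally show ?thesis using colspan unfolding V.orthogonal_complement_def by auto
  qed
  show ?thesis using usC len orth perp by blast
qed



lemma lincomb_vec_scalar:
  fixes us :: "real vec list" and c :: "nat \<Rightarrow> real"
  assumes us: "set us \<subseteq> carrier_vec d" and r: "r \<le> length us" and y: "y \<in> carrier_vec d"
  shows "vec d (\<lambda>i. \<Sum>l<r. c l * (us!l) $ i) \<bullet> y = (\<Sum>l<r. c l * (us!l \<bullet> y))"
proof -
  have ul: "l < r \<Longrightarrow> us ! l \<in> carrier_vec d" for l using us r by auto
  have "vec d (\<lambda>i. \<Sum>l<r. c l * (us!l) $ i) \<bullet> y = (\<Sum>i<d. (\<Sum>l<r. c l * (us!l) $ i) * y $ i)"
    using y by (simp add: scalar_prod_def atLeast0LessThan)
  also have "\<dots> = (\<Sum>l<r. \<Sum>i<d. c l * ((us!l) $ i * y $ i))"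
    by (simp add: sum_distrib_right mult.assoc sum.swap[of _ "{..<d}"])
  also have "\<dots> = (\<Sum>l<r. c l * (us!l \<bullet> y))"
    using ul y by (intro sum.cong refl) (simp add: scalar_prod_def atLeast0LessThan sum_distrib_left)
  finally show ?thesis .
qed

lemma quad_rank_bound:
  fixes M :: "real mat" and us :: "real vec list" and x :: "real vec"
  assumes M: "M \<in> carrier_mat d d" and sym: "M\<^sup>T = M"
  assumes us: "set us \<subseteq> carrier_vec d"
    and orth: "\<forall>a<length us. \<forall>b<length us. us!a \<bullet> us!b = (if a = b then 1 else 0)"
    and perp: "\<forall>w\<in>carrier_vec d. (\<forall>u\<in>set us. w \<bullet> u = 0) \<longrightarrow> (\<forall>j<d. w \<bullet> col M j = 0)"
    and x: "x \<in> carrier_vec d"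
  shows "\<bar>x \<bullet> (M *\<^sub>v x)\<bar> \<le> spec_norm M * (\<Sum>l<length us. (us!l \<bullet> x)\<^sup>2)"
proof -
  let ?r = "length us"
  define c where "c l = us!l \<bullet> x" for l
  define p where "p = vec d (\<lambda>i. \<Sum>l<?r. c l * (us!l) $ i)"
  have pC: "p \<in> carrier_vec d" by (simp add: p_def)
  have ul: "l < ?r \<Longrightarrow> us ! l \<in> carrier_vec d" for l using us by auto
  have pu: "p \<bullet> us!m = c m" if m: "m < ?r" for m
  proof -
    have "p \<bullet> us!m = (\<Sum>l<?r. c l * (us!l \<bullet> us!m))"
      unfolding p_def by (rule lincomb_vec_scalar[OF us order.refl ul[OF m]])
    also have "\<dots> = (\<Sum>l<?r. if l = m then c l else 0)"
      using orth m by (intro sum.cong refl) auto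
    also have "\<dots> = c m" using m by (simp add: sum.delta')
    finally show ?thesis .
  qed
  have pp: "p \<bullet> p = (\<Sum>l<?r. (c l)\<^sup>2)"
  proof -
    have "p \<bullet> p = (\<Sum>l<?r. c l * (us!l \<bullet> p))"
      using lincomb_vec_scalar[OF us order.refl pC, of c] by (simp add: p_def[symmetric])
    also have "\<dots> = (\<Sum>l<?r. (c l)\<^sup>2)"
      using pu ul pC by (intro sum.cong refl) (simp add: comm_scalar_prod[of _ d p] power2_eq_square)
    finally show ?thesis .
  qed
  define w where "w = x - p"
  have wC: "w \<in> carrier_vec d" using x pC by (simp add: w_def)
  have xpw: "x = p + w" using x pC by (intro eq_vecI) (auto simp: w_def)
  have wu: "\<forall>u\<in>set us. w \<bullet> u = 0"
  proof
    fix u assume "u \<in> set us"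
    then obtain m where m: "m < ?r" "u = us ! m" by (auto simp: in_set_conv_nth)
    have "w \<bullet> u = x \<bullet> u - p \<bullet> u"
      unfolding w_def using x pC ul[OF m(1)] m by (simp add: minus_scalar_prod_distrib)
    also have "\<dots> = 0" using pu[OF m(1)] m x ul[OF m(1)] by (simp add: c_def comm_scalar_prod[of _ d x])
    finally show "w \<bullet> u = 0" .
  qed
  have Mw: "M *\<^sub>v w = 0\<^sub>v d"
  proof (intro eq_vecI)
    fix i assume i: "i < dim_vec (0\<^sub>v d :: real vec)"
    have "row M i = col M i"
      using i M sym row_transpose[of i M] by (metis carrier_matD(2) index_zero_vec(2))
    hence "(M *\<^sub>v w) $ i = w \<bullet> col M i"
      using i M wC by (simp add: comm_scalar_prod[of _ d w])
    also have "\<dots> = 0" using perp wC wu i by simp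
    finally show "(M *\<^sub>v w) $ i = 0\<^sub>v d $ i" using i by simp
  qed (use M in simp)
  have Mx: "M *\<^sub>v x = M *\<^sub>v p"
    using M pC wC Mw by (subst xpw) (simp add: mult_add_distrib_mat_vec)
  have "x \<bullet> (M *\<^sub>v x) = p \<bullet> (M *\<^sub>v p) + w \<bullet> (M *\<^sub>v p)"
    unfolding Mx using M pC wC by (subst xpw) (simp add: add_scalar_prod_distrib[of _ d])
  also have "w \<bullet> (M *\<^sub>v p) = (M\<^sup>T *\<^sub>v w) \<bullet> p"
    using M pC wC by (simp add: transpose_vec_mult_scalar)
  also have "\<dots> = 0" using Mw pC by (simp add: sym)
  finally have "x \<bullet> (M *\<^sub>v x) = p \<bullet> (M *\<^sub>v p)" by simp
  hence "\<bar>x \<bullet> (M *\<^sub>v x)\<bar> \<le> spec_norm M * (p \<bullet> p)"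
    using quad_form_bound[OF M pC] by simp
  also have "p \<bullet> p = (\<Sum>l<?r. (us!l \<bullet> x)\<^sup>2)" by (simp add: pp c_def)
  finally show ?thesis .
qed



definition qf :: "nat \<Rightarrow> real mat \<Rightarrow> (nat \<Rightarrow> real) \<Rightarrow> real" where
  "qf d M x = vec d x \<bullet> (M *\<^sub>v vec d x)"

lemma qf_expand:
  assumes M: "M \<in> carrier_mat d d"
  shows "qf d M x = (\<Sum>a<d. x a * (\<Sum>b<d. M $$ (a,b) * x b))"
  using M by (simp add: qf_def scalar_prod_def mult_mat_vec_def row_def atLeast0LessThan)

lemma qf_measurable [measurable]:
  assumes M: "M \<in> carrier_mat d d"
  shows "qf d M \<in> borel_measurable (Pd d)"
proof -
  have "(\<lambda>x. \<Sum>a<d. x a * (\<Sum>b<d. M $$ (a,b) * x b)) \<in> borel_measurable (Pd d)"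
    unfolding Pd_def by measurable
  thus ?thesis by (simp add: qf_expand[OF M] cong: measurable_cong)
qed

lemma G_component_prob:
  assumes A: "A \<in> sets (Pd d)" and i: "i < n"
  shows "measure (gauss_samples d n) {\<omega> \<in> space (gauss_samples d n). \<omega> i \<in> A} = measure (Pd d) A"
proof -
  have "measure (gauss_samples d n) {\<omega> \<in> space (gauss_samples d n). \<omega> i \<in> A}
      = measure (distr (gauss_samples d n) (Pd d) (\<lambda>\<omega>. \<omega> i)) A"
    using A i unfolding gauss_samples_Pd
    by (subst measure_distr) (auto intro: measurable_component_singleton simp: vimage_def Int_def conj_commute)
  also have "distr (gauss_samples d n) (Pd d) (\<lambda>\<omega>. \<omega> i) = Pd d"
    unfolding gauss_samples_Pd using i by (intro distr_PiM_component prob_space_Pd) auto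
  finally show ?thesis .
qed

lemma target_formula:
  fixes M :: "real mat"
  assumes M: "M \<in> carrier_mat d d"
  shows "vnorm ((1 / real n) \<cdot>\<^sub>v (data_mat d n \<omega> *\<^sub>v meas_op d n \<omega> M))
       = sqrt (\<Sum>j<d. ((1 / real n) * (\<Sum>i<n. \<omega> i j * qf d M (\<omega> i)))\<^sup>2)"
proof -
  have "(data_mat d n \<omega> *\<^sub>v meas_op d n \<omega> M) $ j = (\<Sum>i<n. \<omega> i j * qf d M (\<omega> i))" if "j < d" for j
    using that by (simp add: data_mat_def meas_op_def mult_mat_vec_def scalar_prod_def row_def
        sample_vec_def qf_def atLeast0LessThan)
  thus ?thesis unfolding vnorm_def by (simp add: data_mat_def)
qed



lemma lin_form: "(v :: real vec) \<in> carrier_vec d \<Longrightarrow> v \<bullet> vec d x = (\<Sum>j<d. v $ j * x j)"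
  by (simp add: scalar_prod_def atLeast0LessThan)

lemma sq_sum_unit: "(v :: real vec) \<in> carrier_vec d \<Longrightarrow> (\<Sum>j<d. (v $ j)\<^sup>2) = v \<bullet> v"
  unfolding power2_eq_square by (simp add: scalar_prod_def atLeast0LessThan)

lemma qf_neg:
  assumes M: "M \<in> carrier_mat d d"
  shows "qf d M (negv d x) = qf d M x"
  unfolding qf_expand[OF M] negv_def by (intro sum.cong refl) (auto simp: sum_negf)

lemma Pd_coord_tail:
  assumes j: "j < d" and T: "0 \<le> T"
  shows "measure (Pd d) {x \<in> space (Pd d). T < \<bar>x j\<bar>} \<le> 2 * exp (-T\<^sup>2/4)"
proof -
  define u where "u = (\<lambda>j'. if j' = j then 1 else (0::real))"
  have u1: "(\<Sum>j'<d. (u j')\<^sup>2) = 1"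
  proof -
    have "(\<Sum>j'<d. (u j')\<^sup>2) = (\<Sum>j'<d. u j')" by (intro sum.cong) (auto simp: u_def)
    also have "\<dots> = 1" using j by (simp add: u_def)
    finally show ?thesis .
  qed
  have eq: "(\<Sum>j'<d. u j' * x j') = x j" for x
  proof -
    have "(\<Sum>j'<d. u j' * x j') = (\<Sum>j'<d. if j' = j then x j' else 0)"
      by (intro sum.cong) (auto simp: u_def)
    thus ?thesis using j by simp
  qed
  have "measure (Pd d) {x \<in> space (Pd d). T < \<bar>x j\<bar>}
      \<le> measure (Pd d) {x \<in> space (Pd d). T \<le> \<bar>\<Sum>j'<d. u j' * x j'\<bar>}"
  proof (rule finite_measure.finite_measure_mono)
    show "finite_measure (Pd d)" using prob_space_Pd by (rule prob_space.finite_measure)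
    show "{x \<in> space (Pd d). T \<le> \<bar>\<Sum>j'<d. u j' * x j'\<bar>} \<in> sets (Pd d)"
      unfolding Pd_def by measurable
  qed (auto simp: eq)
  also have "\<dots> \<le> 2 * exp (-T\<^sup>2/4)" by (rule Pd_linear_tail[OF u1 T])
  finally show ?thesis .
qed

lemma Pd_lin_tail:
  fixes v :: "real vec"
  assumes v: "v \<in> carrier_vec d" "v \<bullet> v = 1" and T: "0 \<le> T"
  shows "measure (Pd d) {x \<in> space (Pd d). T < \<bar>\<Sum>j<d. v $ j * x j\<bar>} \<le> 2 * exp (-T\<^sup>2/4)"
proof -
  have u1: "(\<Sum>j<d. (v $ j)\<^sup>2) = 1" using sq_sum_unit[OF v(1)] v(2) by simp
  have "measure (Pd d) {x \<in> space (Pd d). T < \<bar>\<Sum>j<d. v $ j * x j\<bar>}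
      \<le> measure (Pd d) {x \<in> space (Pd d). T \<le> \<bar>\<Sum>j<d. v $ j * x j\<bar>}"
  proof (rule finite_measure.finite_measure_mono)
    show "finite_measure (Pd d)" using prob_space_Pd by (rule prob_space.finite_measure)
    show "{x \<in> space (Pd d). T \<le> \<bar>\<Sum>j<d. v $ j * x j\<bar>} \<in> sets (Pd d)"
      unfolding Pd_def by measurable
  qed auto
  also have "\<dots> \<le> 2 * exp (-T\<^sup>2/4)" by (rule Pd_linear_tail[OF u1 T])
  finally show ?thesis .
qed



lemma G_meas_facts:
  shows "i < n \<Longrightarrow> (\<lambda>\<omega>. \<omega> i) \<in> measurable (gauss_samples d n) (Pd d)"
    and "i < n \<Longrightarrow> j < d \<Longrightarrow> (\<lambda>\<omega>. \<omega> i j) \<in> borel_measurable (gauss_samples d n)"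
proof -
  show 1: "i < n \<Longrightarrow> (\<lambda>\<omega>. \<omega> i) \<in> measurable (gauss_samples d n) (Pd d)"
    unfolding gauss_samples_Pd by (rule measurable_component_singleton) simp
  assume i: "i < n" and j: "j < d"
  have "(\<lambda>x. x j) \<in> measurable (Pd d) stdN" unfolding Pd_def
    by (rule measurable_component_singleton) (use j in simp)
  hence "(\<lambda>x. x j) \<in> borel_measurable (Pd d)" by (simp add: measurable_cong_sets[OF refl sets_stdN])
  from measurable_compose[OF 1[OF i] this] show "(\<lambda>\<omega>. \<omega> i j) \<in> borel_measurable (gauss_samples d n)" .
qed

lemma G_space_comp: "\<omega> \<in> space (gauss_samples d n) \<Longrightarrow> i < n \<Longrightarrow> \<omega> i \<in> space (Pd d)"
  unfolding gauss_samples_Pd by (auto simp: space_PiM)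

lemma G_comp_event:
  assumes Q: "Measurable.pred (Pd d) Q" and i: "i < n"
  shows "measure (gauss_samples d n) {\<omega> \<in> space (gauss_samples d n). Q (\<omega> i)}
       = measure (Pd d) {x \<in> space (Pd d). Q x}"
proof -
  have "{\<omega> \<in> space (gauss_samples d n). Q (\<omega> i)}
      = {\<omega> \<in> space (gauss_samples d n). \<omega> i \<in> {x \<in> space (Pd d). Q x}}"
    using G_space_comp i by auto
  also have "measure (gauss_samples d n) \<dots> = measure (Pd d) {x \<in> space (Pd d). Q x}"
    using Q i by (intro G_component_prob) auto
  finally show ?thesis .
qed

lemma main_bound:
  fixes M :: "real mat" and us :: "real vec list"
  assumes M: "M \<in> carrier_mat d d" and sym: "M\<^sup>T = M"
    and us: "set us \<subseteq> carrier_vec d"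
    and orth: "\<forall>a<length us. \<forall>b<length us. us!a \<bullet> us!b = (if a = b then 1 else 0)"
    and perp: "\<forall>w\<in>carrier_vec d. (\<forall>u\<in>set us. w \<bullet> u = 0) \<longrightarrow> (\<forall>j<d. w \<bullet> col M j = 0)"
    and rd: "length us \<le> d" and d: "0 < d" and eta: "0 < \<eta>" "\<eta> < 1" and del: "0 < \<delta>"
    and nbig: "128 * real d * (real (length us))\<^sup>2 * (ln (8 * real n * real d / \<eta>))^3
                 * ln (4 * real d / \<eta>) / \<delta>\<^sup>2 \<le> real n"
  shows "1 - \<eta> \<le> measure (gauss_samples d n)
              {\<omega> \<in> space (gauss_samples d n).
                 vnorm ((1 / real n) \<cdot>\<^sub>v (data_mat d n \<omega> *\<^sub>v meas_op d n \<omega> M))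
                   \<le> \<delta> * spec_norm M}"
proof -
  let ?G = "gauss_samples d n"
  interpret G: prob_space ?G by (rule prob_space_G)
  define m where "m = spec_norm M"
  define r where "r = length us"
  have m0: "0 \<le> m" unfolding m_def using M d by (intro spec_norm_nonneg) auto
  have usl: "l < r \<Longrightarrow> us ! l \<in> carrier_vec d" for l using us by (auto simp: r_def)
  have qfb: "\<bar>qf d M x\<bar> \<le> m * (\<Sum>l<r. (\<Sum>j<d. (us!l) $ j * x j)\<^sup>2)" for x
  proof -
    have "(\<Sum>l<r. (us!l \<bullet> vec d x)\<^sup>2) = (\<Sum>l<r. (\<Sum>j<d. (us!l) $ j * x j)\<^sup>2)"
      using usl by (intro sum.cong refl) (simp add: lin_form)
    thus ?thesis
      using quad_rank_bound[OF M sym us orth perp, of "vec d x"]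
      by (simp add: qf_def m_def r_def comm_scalar_prod[of _ d "vec d x"])
  qed
  define F where "F \<omega> = sqrt (\<Sum>j<d. ((1 / real n) * (\<Sum>i<n. \<omega> i j * qf d M (\<omega> i)))\<^sup>2)" for \<omega>
  have tgt: "{\<omega> \<in> space ?G. vnorm ((1 / real n) \<cdot>\<^sub>v (data_mat d n \<omega> *\<^sub>v meas_op d n \<omega> M)) \<le> \<delta> * spec_norm M}
      = {\<omega> \<in> space ?G. F \<omega> \<le> \<delta> * m}"
    by (simp add: target_formula[OF M] F_def m_def)
  have qfm [measurable]: "qf d M \<in> borel_measurable (Pd d)" using M by (rule qf_measurable)
  note G_meas_facts [measurable]
  have Fm: "F \<in> borel_measurable ?G" unfolding F_def by measurable
  have tgt_sets: "{\<omega> \<in> space ?G. F \<omega> \<le> \<delta> * m} \<in> sets ?G" using Fm by measurable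
  show ?thesis
  proof (cases "n = 0 \<or> r = 0 \<or> m = 0")
    case True
    have qf0: "qf d M x = 0" if "r = 0 \<or> m = 0" for x
      using qfb[of x] that by auto
    have "F \<omega> = 0" for \<omega>
      using True qf0 by (auto simp: F_def)
    hence "{\<omega> \<in> space ?G. F \<omega> \<le> \<delta> * m} = space ?G" using m0 del by auto
    thus ?thesis unfolding tgt using eta by (simp add: G.prob_space)
  next
    case False
    hence n: "n > 0" and r: "r > 0" and mpos: "m > 0" using m0 by auto
    have n1: "real n \<ge> 1" and d1: "real d \<ge> 1" using n d by auto
    define \<Lambda> where "\<Lambda> = ln (8 * real n * real d / \<eta>)"
    have gt1: "8 * real n * real d / \<eta> > 1"
    proof -
      have "8 * real n * real d \<ge> 8" using n1 d1
        by (metis mult.right_neutral mult_left_mono mult_mono' one_le_numeral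
            order_trans zero_le_numeral zero_le_one)
      hence "8 * real n * real d > \<eta>" using eta by linarith
      thus ?thesis using eta by simp
    qed
    have Lpos: "\<Lambda> > 0" unfolding \<Lambda>_def using gt1 by simp
    define T where "T = sqrt (4 * \<Lambda>)"
    have Tpos: "T > 0" unfolding T_def using Lpos by simp
    have T2: "T\<^sup>2 = 4 * \<Lambda>" unfolding T_def using Lpos by simp
    have expT: "exp (-T\<^sup>2/4) = \<eta> / (8 * real n * real d)"
    proof -
      have "exp (-T\<^sup>2/4) = exp (- \<Lambda>)" using T2 by simp
      also have "\<dots> = 1 / exp \<Lambda>" by (simp add: exp_minus field_simps)
      also have "exp \<Lambda> = 8 * real n * real d / \<eta>" unfolding \<Lambda>_def using gt1 by simp
      finally show ?thesis by simp
    qed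
    define good where "good x = ((\<forall>j\<in>{..<d}. \<bar>x j\<bar> \<le> T) \<and>
        (\<forall>l\<in>{..<r}. \<bar>\<Sum>j<d. (us!l) $ j * x j\<bar> \<le> T))" for x :: "nat \<Rightarrow> real"
    define W where "W j x = (if good x then x j * qf d M x else 0)" for j x
    define B where "B = m * real r * T ^ 3"
    define \<epsilon> where "\<epsilon> = real n * \<delta> * m / sqrt (real d)"
    have Bpos: "B > 0" unfolding B_def using mpos r Tpos by simp
    have epos: "\<epsilon> \<ge> 0" unfolding \<epsilon>_def using del mpos by simp
    have goodm [measurable]: "Measurable.pred (Pd d) good"
    proof -
      have [measurable]: "j < d \<Longrightarrow> (\<lambda>x. x j) \<in> borel_measurable (Pd d)" for j
      proof -
        assume j: "j < d"
        have "(\<lambda>x. x j) \<in> measurable (Pd d) stdN" unfolding Pd_def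
          by (rule measurable_component_singleton) (use j in simp)
        thus ?thesis by (simp add: measurable_cong_sets[OF refl sets_stdN])
      qed
      show ?thesis unfolding good_def by measurable
    qed
    have Wm [measurable]: "j < d \<Longrightarrow> W j \<in> borel_measurable (Pd d)" for j
    proof -
      assume j: "j < d"
      have "(\<lambda>x. x j) \<in> measurable (Pd d) stdN" unfolding Pd_def
        by (rule measurable_component_singleton) (use j in simp)
      hence [measurable]: "(\<lambda>x. x j) \<in> borel_measurable (Pd d)"
        by (simp add: measurable_cong_sets[OF refl sets_stdN])
      show ?thesis unfolding W_def by measurable
    qed
    have qf_good: "\<bar>qf d M x\<bar> \<le> m * real r * T\<^sup>2" if "good x" for x
    proof -
      have "(\<Sum>l<r. (\<Sum>j<d. (us!l) $ j * x j)\<^sup>2) \<le> (\<Sum>l<r. T\<^sup>2)"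
      proof (intro sum_mono)
        fix l assume "l \<in> {..<r}"
        hence "\<bar>\<Sum>j<d. (us!l) $ j * x j\<bar> \<le> T" using that unfolding good_def by auto
        hence "\<bar>\<Sum>j<d. (us!l) $ j * x j\<bar>\<^sup>2 \<le> T\<^sup>2" by (intro power_mono) auto
        thus "(\<Sum>j<d. (us!l) $ j * x j)\<^sup>2 \<le> T\<^sup>2" by simp
      qed
      hence "m * (\<Sum>l<r. (\<Sum>j<d. (us!l) $ j * x j)\<^sup>2) \<le> m * (real r * T\<^sup>2)"
        using m0 by (intro mult_left_mono) auto
      thus ?thesis using qfb[of x] by simp
    qed
    have Wb: "\<bar>W j x\<bar> \<le> B" if j: "j < d" for j x
    proof (cases "good x")
      case True
      have xj: "\<bar>x j\<bar> \<le> T" using True j unfolding good_def by auto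
      have "\<bar>W j x\<bar> = \<bar>x j\<bar> * \<bar>qf d M x\<bar>" using True by (simp add: W_def abs_mult)
      also have "\<dots> \<le> T * (m * real r * T\<^sup>2)"
        using xj qf_good[OF True] by (intro mult_mono) auto
      also have "\<dots> = B" by (simp add: B_def power2_eq_square power3_eq_cube)
      finally show ?thesis .
    next
      case False
      thus ?thesis using Bpos by (simp add: W_def)
    qed
    have Wodd: "W j (negv d x) = - W j x" if j: "j < d" and x: "x \<in> space (Pd d)" for j x
    proof -
      have nx: "negv d x j' = - x j'" if "j' < d" for j' using that by (simp add: negv_def)
      have "(\<Sum>j'<d. (us!l) $ j' * negv d x j') = - (\<Sum>j'<d. (us!l) $ j' * x j')" for l
        by (simp add: nx sum_negf[symmetric])
      hence "good (negv d x) = good x" unfolding good_def by (simp add: nx)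
      thus ?thesis using nx[OF j] qf_neg[OF M] by (simp add: W_def)
    qed
    define E1 where "E1 p = {\<omega> \<in> space ?G. T < \<bar>\<omega> (fst p) (snd p)\<bar>}" for p :: "nat \<times> nat"
    define E2 where "E2 p = {\<omega> \<in> space ?G. T < \<bar>\<Sum>j<d. (us!(snd p)) $ j * \<omega> (fst p) j\<bar>}" for p :: "nat \<times> nat"
    define E3 where "E3 j = {\<omega> \<in> space ?G. \<epsilon> \<le> \<bar>\<Sum>i<n. W j (\<omega> i)\<bar>}" for j
    define I1 where "I1 = {..<n} \<times> {..<d}"
    define I2 where "I2 = {..<n} \<times> {..<r}"
    define Bad where "Bad = (\<Union>p\<in>I1. E1 p) \<union> (\<Union>p\<in>I2. E2 p) \<union> (\<Union>j\<in>{..<d}. E3 j)"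
    have Wcm [measurable]: "i < n \<Longrightarrow> j < d \<Longrightarrow> (\<lambda>\<omega>. W j (\<omega> i)) \<in> borel_measurable ?G" for i j
      by (rule measurable_compose[OF G_meas_facts(1) Wm])
    have E1s: "E1 (i, j) \<in> sets ?G" if "i < n" "j < d" for i j
      using that unfolding E1_def prod.sel by measurable
    have E2s: "E2 (i, l) \<in> sets ?G" if "i < n" for i l
      using that unfolding E2_def prod.sel by measurable
    have E3s: "E3 j \<in> sets ?G" if "j < d" for j
      using that unfolding E3_def by measurable
    have T0: "0 \<le> T" using Tpos by simp
    have compm: "(\<lambda>x. x j) \<in> borel_measurable (Pd d)" if "j < d" for j
    proof -
      have "(\<lambda>x. x j) \<in> measurable (Pd d) stdN" unfolding Pd_def
        by (rule measurable_component_singleton) (use that in simp)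
      thus ?thesis by (simp add: measurable_cong_sets[OF refl sets_stdN])
    qed
    have P1: "measure ?G (E1 p) \<le> 2 * exp (-T\<^sup>2/4)" if pI: "p \<in> I1" for p
    proof -
      obtain i j where p: "p = (i, j)" "i < n" "j < d" using pI unfolding I1_def by (cases p) auto
      have [measurable]: "(\<lambda>x. x j) \<in> borel_measurable (Pd d)" by (rule compm[OF p(3)])
      have "measure ?G (E1 p) = measure (Pd d) {x \<in> space (Pd d). T < \<bar>x j\<bar>}"
        unfolding E1_def p prod.sel by (rule G_comp_event[OF _ p(2)]) measurable
      also have "\<dots> \<le> 2 * exp (-T\<^sup>2/4)" by (rule Pd_coord_tail[OF p(3) T0])
      finally show ?thesis .
    qed
    have P2: "measure ?G (E2 p) \<le> 2 * exp (-T\<^sup>2/4)" if pI: "p \<in> I2" for p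
    proof -
      obtain i l where p: "p = (i, l)" "i < n" "l < r" using pI unfolding I2_def by (cases p) auto
      have v1: "us!l \<bullet> us!l = 1" using orth p(3) by (simp add: r_def)
      have "measure ?G (E2 p) = measure (Pd d) {x \<in> space (Pd d). T < \<bar>\<Sum>j<d. (us!l) $ j * x j\<bar>}"
        unfolding E2_def p prod.sel by (rule G_comp_event[OF _ p(2)]) (use compm in measurable)
      also have "\<dots> \<le> 2 * exp (-T\<^sup>2/4)" by (rule Pd_lin_tail[OF usl[OF p(3)] v1 T0])
      finally show ?thesis .
    qed
    have P3: "measure ?G (E3 j) \<le> 2 * exp (- \<epsilon>\<^sup>2 / (2 * real n * B\<^sup>2))" if "j < d" for j
      unfolding E3_def
      by (rule G_hoeffding[OF Wm[OF that] Wb[OF that] Wodd[OF that] Bpos n epos])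
    have E1s': "E1 ` I1 \<subseteq> sets ?G" unfolding I1_def using E1s by blast
    have E2s': "E2 ` I2 \<subseteq> sets ?G" unfolding I2_def using E2s by blast
    have E3s': "E3 ` {..<d} \<subseteq> sets ?G" by (auto intro: E3s)
    have nd0: "real n * real d > 0" using n d by simp
    have U1: "measure ?G (\<Union>p\<in>I1. E1 p) \<le> \<eta> / 4"
    proof -
      have "measure ?G (\<Union>p\<in>I1. E1 p) \<le> (\<Sum>p\<in>I1. measure ?G (E1 p))"
        using E1s' by (intro G.finite_measure_subadditive_finite) (auto simp: I1_def)
      also have "\<dots> \<le> real (card I1) * (2 * exp (-T\<^sup>2/4))" by (rule sum_bounded_above[OF P1])
      also have "\<dots> = \<eta> / 4" using nd0 n d unfolding expT by (simp add: I1_def card_cartesian_product field_simps)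
      finally show ?thesis .
    qed
    have U2: "measure ?G (\<Union>p\<in>I2. E2 p) \<le> \<eta> / 4"
    proof -
      have "measure ?G (\<Union>p\<in>I2. E2 p) \<le> (\<Sum>p\<in>I2. measure ?G (E2 p))"
        using E2s' by (intro G.finite_measure_subadditive_finite) (auto simp: I2_def)
      also have "\<dots> \<le> real (card I2) * (2 * exp (-T\<^sup>2/4))" by (rule sum_bounded_above[OF P2])
      also have "\<dots> = real r * \<eta> / (4 * real d)" using nd0 n d unfolding expT by (simp add: I2_def card_cartesian_product field_simps)
      also have "\<dots> \<le> real d * \<eta> / (4 * real d)"
        using rd eta by (intro divide_right_mono mult_right_mono) (auto simp: r_def)
      also have "\<dots> = \<eta> / 4" using d by simp
      finally show ?thesis .
    qed
    have expo: "exp (- \<epsilon>\<^sup>2 / (2 * real n * B\<^sup>2)) \<le> \<eta> / (4 * real d)"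
    proof -
      have key: "\<epsilon>\<^sup>2 / (2 * real n * B\<^sup>2) = real n * \<delta>\<^sup>2 / (128 * real d * (real r)\<^sup>2 * \<Lambda> ^ 3)"
      proof -
        have "B\<^sup>2 = m\<^sup>2 * (real r)\<^sup>2 * (T\<^sup>2) ^ 3" by (simp add: B_def power_mult_distrib power_mult[symmetric])
        also have "\<dots> = 64 * m\<^sup>2 * (real r)\<^sup>2 * \<Lambda> ^ 3" by (simp add: T2 power_mult_distrib)
        finally have B2: "B\<^sup>2 = 64 * m\<^sup>2 * (real r)\<^sup>2 * \<Lambda> ^ 3" .
        have e2: "\<epsilon>\<^sup>2 = (real n)\<^sup>2 * \<delta>\<^sup>2 * m\<^sup>2 / real d"
          unfolding \<epsilon>_def using d by (simp add: power_divide power_mult_distrib)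
        show ?thesis unfolding B2 e2 using n mpos r d Lpos
          by (simp add: field_simps power2_eq_square)
      qed
      have pos: "128 * real d * (real r)\<^sup>2 * \<Lambda> ^ 3 > 0" using d r Lpos by simp
      have "128 * real d * (real r)\<^sup>2 * \<Lambda> ^ 3 * ln (4 * real d / \<eta>) / \<delta>\<^sup>2 \<le> real n"
        using nbig by (simp add: r_def \<Lambda>_def)
      hence "ln (4 * real d / \<eta>) \<le> real n * \<delta>\<^sup>2 / (128 * real d * (real r)\<^sup>2 * \<Lambda> ^ 3)"
        using pos del by (simp add: field_simps)
      hence "ln (4 * real d / \<eta>) \<le> \<epsilon>\<^sup>2 / (2 * real n * B\<^sup>2)" by (simp add: key)
      hence "exp (- \<epsilon>\<^sup>2 / (2 * real n * B\<^sup>2)) \<le> exp (- ln (4 * real d / \<eta>))" by simp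
      also have "\<dots> = \<eta> / (4 * real d)" using d eta by (simp add: exp_minus)
      finally show ?thesis .
    qed
    have U3: "measure ?G (\<Union>j\<in>{..<d}. E3 j) \<le> \<eta> / 2"
    proof -
      have "measure ?G (\<Union>j\<in>{..<d}. E3 j) \<le> (\<Sum>j\<in>{..<d}. measure ?G (E3 j))"
        by (rule G.finite_measure_subadditive_finite) (auto simp: E3s')
      also have "\<dots> \<le> real (card {..<d}) * (2 * (\<eta> / (4 * real d)))"
        by (rule sum_bounded_above) (use P3 expo in force)
      also have "\<dots> = \<eta> / 2" using d by simp
      finally show ?thesis .
    qed
    have Bads: "Bad \<in> sets ?G" unfolding Bad_def
      using E1s' E2s' E3s' by (intro sets.Un sets.finite_UN) (auto simp: I1_def I2_def)
    have PB: "measure ?G Bad \<le> \<eta>"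
    proof -
      have s1: "(\<Union>p\<in>I1. E1 p) \<in> sets ?G" using E1s' by (intro sets.finite_UN) (auto simp: I1_def)
      have s2: "(\<Union>p\<in>I2. E2 p) \<in> sets ?G" using E2s' by (intro sets.finite_UN) (auto simp: I2_def)
      have s3: "(\<Union>j\<in>{..<d}. E3 j) \<in> sets ?G" using E3s' by (intro sets.finite_UN) auto
      have "measure ?G Bad \<le> measure ?G ((\<Union>p\<in>I1. E1 p) \<union> (\<Union>p\<in>I2. E2 p)) + measure ?G (\<Union>j\<in>{..<d}. E3 j)"
        unfolding Bad_def using s1 s2 s3 by (intro measure_Un_le) auto
      also have "\<dots> \<le> (measure ?G (\<Union>p\<in>I1. E1 p) + measure ?G (\<Union>p\<in>I2. E2 p)) + measure ?G (\<Union>j\<in>{..<d}. E3 j)"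
        using s1 s2 by (intro add_right_mono measure_Un_le) auto
      also have "\<dots> \<le> (\<eta>/4 + \<eta>/4) + \<eta>/2" using U1 U2 U3 by (intro add_mono) auto
      finally show ?thesis by simp
    qed
    have sub: "space ?G - Bad \<subseteq> {\<omega> \<in> space ?G. F \<omega> \<le> \<delta> * m}"
    proof
      fix \<omega> assume w: "\<omega> \<in> space ?G - Bad"
      have gd: "good (\<omega> i)" if i: "i < n" for i
      proof -
        have "\<bar>\<omega> i j\<bar> \<le> T" if j: "j < d" for j
        proof -
          have "(i, j) \<in> I1" using i j by (simp add: I1_def)
          hence "\<omega> \<notin> E1 (i, j)" using w unfolding Bad_def by blast
          thus ?thesis using w unfolding E1_def by auto
        qed
        moreover have "\<bar>\<Sum>j<d. (us!l) $ j * \<omega> i j\<bar> \<le> T" if l: "l < r" for l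
        proof -
          have "(i, l) \<in> I2" using i l by (simp add: I2_def)
          hence "\<omega> \<notin> E2 (i, l)" using w unfolding Bad_def by blast
          thus ?thesis using w unfolding E2_def by auto
        qed
        ultimately show ?thesis unfolding good_def by auto
      qed
      have Sj: "((1 / real n) * (\<Sum>i<n. \<omega> i j * qf d M (\<omega> i)))\<^sup>2 \<le> (\<delta> * m)\<^sup>2 / real d"
        if j: "j < d" for j
      proof -
        have "\<omega> \<notin> E3 j" using w j unfolding Bad_def by blast
        hence "\<bar>\<Sum>i<n. W j (\<omega> i)\<bar> < \<epsilon>" using w unfolding E3_def by auto
        moreover have "(\<Sum>i<n. W j (\<omega> i)) = (\<Sum>i<n. \<omega> i j * qf d M (\<omega> i))"
          using gd by (intro sum.cong refl) (simp add: W_def)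
        ultimately have "\<bar>\<Sum>i<n. \<omega> i j * qf d M (\<omega> i)\<bar> \<le> \<epsilon>" by simp
        hence "\<bar>(1 / real n) * (\<Sum>i<n. \<omega> i j * qf d M (\<omega> i))\<bar> \<le> \<delta> * m / sqrt (real d)"
          using n unfolding \<epsilon>_def by (simp add: abs_mult field_simps)
        hence "\<bar>(1 / real n) * (\<Sum>i<n. \<omega> i j * qf d M (\<omega> i))\<bar>\<^sup>2 \<le> (\<delta> * m / sqrt (real d))\<^sup>2"
          by (intro power_mono) auto
        thus ?thesis using d by (simp add: power_divide)
      qed
      have "(\<Sum>j<d. ((1 / real n) * (\<Sum>i<n. \<omega> i j * qf d M (\<omega> i)))\<^sup>2) \<le> (\<Sum>j<d. (\<delta> * m)\<^sup>2 / real d)"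
        using Sj by (intro sum_mono) auto
      also have "\<dots> = (\<delta> * m)\<^sup>2" using d by simp
      finally have "F \<omega> \<le> sqrt ((\<delta> * m)\<^sup>2)" unfolding F_def by (intro real_sqrt_le_mono)
      also have "\<dots> = \<delta> * m" using del m0 by simp
      finally show "\<omega> \<in> {\<omega> \<in> space ?G. F \<omega> \<le> \<delta> * m}" using w by auto
    qed
    have "1 - \<eta> \<le> 1 - measure ?G Bad" using PB by simp
    also have "\<dots> = measure ?G (space ?G - Bad)" using Bads by (simp add: G.prob_compl)
    also have "\<dots> \<le> measure ?G {\<omega> \<in> space ?G. F \<omega> \<le> \<delta> * m}"
      by (rule G.finite_measure_mono[OF sub tgt_sets])
    finally show ?thesis unfolding tgt .
  qed
qed



lemma ln8_le: "ln (8::real) \<le> 3"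
proof -
  have "ln (8::real) = ln (2 ^ 3)" by simp
  also have "\<dots> = 3 * ln 2" by (subst ln_realpow) auto
  finally have "ln (8::real) = 3 * ln 2" .
  thus ?thesis using ln_2_less_1 by simp
qed

lemma arith_bound:
  fixes d n r k :: nat and \<eta> \<delta> :: real
  assumes d: "d > 0" and n: "n > 0" and eta: "0 < \<eta>" "\<eta> < 1" and del: "0 < \<delta>" and rk: "r \<le> k"
    and nC: "real n \<ge> 20000 * (1 + ln (real d * real n / \<eta>)) ^ 4 * real k ^ 2 * real d / \<delta>\<^sup>2"
  shows "128 * real d * (real r)\<^sup>2 * (ln (8 * real n * real d / \<eta>))^3
                 * ln (4 * real d / \<eta>) / \<delta>\<^sup>2 \<le> real n"
proof -
  define L where "L = 1 + ln (real d * real n / \<eta>)"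
  define \<Lambda> where "\<Lambda> = ln (8 * real n * real d / \<eta>)"
  have dn1: "real d * real n / \<eta> \<ge> 1"
  proof -
    have "d * n \<ge> 1" using d n by (cases d; cases n) auto
    hence "real d * real n \<ge> 1" by (metis of_nat_1 of_nat_le_iff of_nat_mult)
    thus ?thesis using eta by (simp add: field_simps)
  qed
  have L1: "L \<ge> 1" unfolding L_def using dn1 by simp
  have Lam: "\<Lambda> = ln 8 + ln (real d * real n / \<eta>)"
  proof -
    have e: "8 * real n * real d / \<eta> = 8 * (real d * real n / \<eta>)" by (simp add: field_simps)
    have pos: "0 < real d * real n / \<eta>" using dn1 by linarith
    show ?thesis unfolding \<Lambda>_def e by (rule ln_mult_pos) (use pos in auto)
  qed
  have Lam0: "\<Lambda> \<ge> 0" using Lam dn1 by simp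
  have Lam3: "\<Lambda> \<le> 3 * L" using Lam ln8_le L1 unfolding L_def by simp
  have l4: "ln (4 * real d / \<eta>) \<le> \<Lambda>"
    unfolding \<Lambda>_def using d n eta
    by (intro ln_mono) (auto simp: field_simps intro!: mult_right_mono)
  have l40: "0 \<le> ln (4 * real d / \<eta>)" using d eta by simp
  have "\<Lambda> ^ 3 * ln (4 * real d / \<eta>) \<le> (3 * L) ^ 3 * (3 * L)"
    using Lam0 Lam3 l4 l40 by (intro mult_mono power_mono) auto
  also have "\<dots> = 81 * L ^ 4" by (simp add: power_mult_distrib eval_nat_numeral)
  finally have A: "\<Lambda> ^ 3 * ln (4 * real d / \<eta>) \<le> 81 * L ^ 4" .
  have rk2: "(real r)\<^sup>2 \<le> (real k)\<^sup>2" using rk by (intro power_mono) auto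
  have "128 * real d * (real r)\<^sup>2 * \<Lambda>^3 * ln (4 * real d / \<eta>) / \<delta>\<^sup>2
      = 128 * real d * (real r)\<^sup>2 * (\<Lambda>^3 * ln (4 * real d / \<eta>)) / \<delta>\<^sup>2" by (simp add: mult_ac)
  also have "\<dots> \<le> 128 * real d * (real k)\<^sup>2 * (81 * L ^ 4) / \<delta>\<^sup>2"
  proof (intro divide_right_mono)
    have "128 * real d * (real r)\<^sup>2 \<le> 128 * real d * (real k)\<^sup>2"
      using rk2 by (intro mult_left_mono) auto
    thus "128 * real d * (real r)\<^sup>2 * (\<Lambda>^3 * ln (4 * real d / \<eta>)) \<le> 128 * real d * (real k)\<^sup>2 * (81 * L ^ 4)"
      by (rule mult_mono[OF _ A]) (use Lam0 l40 in auto)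
  qed simp
  also have "\<dots> \<le> 20000 * L ^ 4 * real k ^ 2 * real d / \<delta>\<^sup>2"
    using del by (intro divide_right_mono) (auto simp: mult_ac)
  also have "\<dots> \<le> real n" using nC by (simp add: L_def)
  finally show ?thesis by (simp add: \<Lambda>_def)
qed

theorem lemma6:
  "\<exists>(c::real) (p::nat). c > 0 \<and>
     (\<forall>(d::nat) (n::nat) (\<eta>::real) (k::nat) (\<delta>::real) (M::real mat).
        let C = c * (1 + ln (real d * real n / \<eta>)) ^ p in
        0 < \<eta> \<and> \<eta> < 1 \<and> real d \<ge> C \<and> 0 < \<delta> \<and> \<delta> < 1 \<and>
        M \<in> carrier_mat d d \<and> M\<^sup>T = M \<and> vec_space.rank d M \<le> k \<and>
        real n \<ge> C * real k ^ 2 * real d / \<delta>\<^sup>2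
        \<longrightarrow> measure (gauss_samples d n)
              {\<omega> \<in> space (gauss_samples d n).
                 vnorm ((1 / real n) \<cdot>\<^sub>v (data_mat d n \<omega> *\<^sub>v meas_op d n \<omega> M))
                   \<le> \<delta> * spec_norm M}
            \<ge> 1 - \<eta>)"
  unfolding Let_def
proof (intro exI[of _ "20000::real"] exI[of _ "4::nat"] conjI allI impI, simp, elim conjE)
  fix d n :: nat and \<eta> \<delta> :: real and k and M :: "real mat"
  assume eta: "0 < \<eta>" "\<eta> < 1" and dC: "20000 * (1 + ln (real d * real n / \<eta>)) ^ 4 \<le> real d"
    and del: "0 < \<delta>" "\<delta> < 1" and M: "M \<in> carrier_mat d d" and sym: "M\<^sup>T = M"
    and rk: "vec_space.rank d M \<le> k"
    and nC: "20000 * (1 + ln (real d * real n / \<eta>)) ^ 4 * real k ^ 2 * real d / \<delta>\<^sup>2 \<le> real n"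
  have L1: "1 + ln (real d * real n / \<eta>) \<ge> 1"
  proof (cases "d = 0 \<or> n = 0")
    case True thus ?thesis by auto
  next
    case False
    hence "d * n \<ge> 1" by (cases d; cases n) auto
    hence "real d * real n \<ge> 1" by (metis of_nat_1 of_nat_le_iff of_nat_mult)
    hence "real d * real n / \<eta> \<ge> 1" using eta by (simp add: field_simps)
    thus ?thesis by simp
  qed
  have "1 \<le> (1 + ln (real d * real n / \<eta>)) ^ 4" by (rule one_le_power[OF L1])
  hence "real d \<ge> 20000" using dC by linarith
  hence d: "d > 0" by simp
  obtain us :: "real vec list" where us: "set us \<subseteq> carrier_vec d" "length us = vec_space.rank d M"
    "\<forall>a<length us. \<forall>b<length us. us!a \<bullet> us!b = (if a = b then 1 else 0)"
    "\<forall>w\<in>carrier_vec d. (\<forall>u\<in>set us. w \<bullet> u = 0) \<longrightarrow> (\<forall>j<d. w \<bullet> col M j = 0)"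
    using onb_exists[OF M] by blast
  have rd: "length us \<le> d"
  proof -
    interpret V: vec_space "TYPE(real)" d .
    show ?thesis using us(2) V.rank_le_nc[OF M] by simp
  qed
  have nbig: "128 * real d * (real (length us))\<^sup>2 * (ln (8 * real n * real d / \<eta>))^3
                 * ln (4 * real d / \<eta>) / \<delta>\<^sup>2 \<le> real n"
  proof (cases "n = 0")
    case True thus ?thesis by simp
  next
    case False
    thus ?thesis using arith_bound[OF d _ eta del(1) _ nC] us(2) rk by simp
  qed
  show "1 - \<eta> \<le> measure (gauss_samples d n)
              {\<omega> \<in> space (gauss_samples d n).
                 vnorm ((1 / real n) \<cdot>\<^sub>v (data_mat d n \<omega> *\<^sub>v meas_op d n \<omega> M))
                   \<le> \<delta> * spec_norm M}"
    by (rule main_bound[OF M sym us(1) us(3) us(4) rd d eta del(1) nbig])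
qed


end
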